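(* Let $I$ be a BPPS instance with $d$ scenarios in which every item has size at least $\varepsilon^2$, let $\bar I$ be its linearly grouped instance, let $\bar{\mathcal{P}}^1$ be an optimal solution for $\bar I$, and let $\mathcal{P}^1$ be obtained from $\bar{\mathcal{P}}^1$ by replacing each item of $\bar G_t^\ell$ by its corresponding item of $G_t^\ell$. Then $\mathrm{val}_{BPPS}(\mathcal{P}^1)\le\mathrm{OPT}(I)$.
   Context: A BPPS instance has $d$ scenarios, items $\mathcal{I}$, each item $i$ with size $s_i$ and type $\mathcal{K}_i\subseteq\{1,\dots,d\}$, and bins of capacity $1$; $S_k=\{i:k\in\mathcal{K}_i\}$. A packing is a partition $\mathcal{P}$ of a set of items with $\sum_{i\in B\cap S_k}s_i\le1$ for all $B\in\mathcal{P}$ and all $k$; its value is $\mathrm{val}_{BPPS}(\mathcal{P})=\max_k|\{B\in\mathcal{P}:B\cap S_k\ne\emptyset\}|$; $\mathrm{OPT}(I)$ is the minimum value of a packing of all items of $I$. $\mathcal{T}$ is the set of all types. Fix $\varepsilon\in(0,1/4]$ with $1/\varepsilon$ an integer, $m=2^d/\varepsilon^3-1$. For each type $t$, the items of type $t$ sorted in nonincreasing size are partitioned into consecutive groups $G_t^0,\dots,G_t^m$, each of the first $m$ having $\lceil|\mathcal{I}_t|/(m+1)\rceil$ items and the last at most that many. For $\ell\in\{1,\dots,m\}$, $\bar G_t^\ell$ contains, for each item of $G_t^\ell$, a corresponding new item of type $t$ with size equal to the largest size in $G_t^\ell$ (this gives a bijection between $G_t^\ell$ and $\bar G_t^\ell$).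 The linearly grouped instance $\bar I$ has item set $\bigcup_{t,\ \ell\ge1}\bar G_t^\ell$. *)

theory Defs
  imports Complex_Main "HOL-Library.Disjoint_Sets"
begin

definition bpps_instance :: "nat \<Rightarrow> 'i set \<Rightarrow> ('i \<Rightarrow> real) \<Rightarrow> ('i \<Rightarrow> nat set) \<Rightarrow> bool" where
  "bpps_instance d X s K \<longleftrightarrow> d \<ge> 1 \<and> finite X \<and>
     (\<forall>i\<in>X. K i \<subseteq> {1..d} \<and> 0 < s i \<and> s i \<le> 1)"

definition is_packing :: "nat \<Rightarrow> ('i \<Rightarrow> real) \<Rightarrow> ('i \<Rightarrow> nat set) \<Rightarrow> 'i set \<Rightarrow> 'i set set \<Rightarrow> bool" where
  "is_packing d s K X P \<longleftrightarrow> partition_on X P \<and>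
     (\<forall>B\<in>P. \<forall>k\<in>{1..d}. (\<Sum>i\<in>{i\<in>B. k \<in> K i}. s i) \<le> 1)"

definition val_bpps :: "nat \<Rightarrow> ('i \<Rightarrow> nat set) \<Rightarrow> 'i set set \<Rightarrow> nat" where
  "val_bpps d K P = Max ((\<lambda>k. card {B\<in>P. \<exists>i\<in>B. k \<in> K i}) ` {1..d})"

definition OPT_bpps :: "nat \<Rightarrow> ('i \<Rightarrow> real) \<Rightarrow> ('i \<Rightarrow> nat set) \<Rightarrow> 'i set \<Rightarrow> nat" where
  "OPT_bpps d s K X = (LEAST n. \<exists>P. is_packing d s K X P \<and> val_bpps d K P = n)"

definition grp_size :: "nat \<Rightarrow> 'i list \<Rightarrow> nat" where
  "grp_size m xs = nat \<lceil>real (length xs) / real (m + 1)\<rceil>"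

definition grp :: "nat \<Rightarrow> 'i list \<Rightarrow> nat \<Rightarrow> 'i set" where
  "grp m xs l = {xs ! p | p. p < length xs \<and> p div grp_size m xs = l}"

definition sorted_type_lists :: "'i set \<Rightarrow> ('i \<Rightarrow> real) \<Rightarrow> ('i \<Rightarrow> nat set) \<Rightarrow> (nat set \<Rightarrow> 'i list) \<Rightarrow> bool" where
  "sorted_type_lists X s K L \<longleftrightarrow> (\<forall>t. distinct (L t) \<and> set (L t) = {i\<in>X. K i = t}
      \<and> sorted_wrt (\<lambda>a b. s a \<ge> s b) (L t))"

text \<open>The linearly grouped instance: the new item corresponding to item i of group
  G_t^l (l \<ge> 1) is (i,l); its size is the largest size in G_t^l, its type is t.\<close>

definition lg_items :: "nat \<Rightarrow> 'i set \<Rightarrow> ('i \<Rightarrow> nat set) \<Rightarrow> (nat set \<Rightarrow> 'i list) \<Rightarrow> ('i \<times> nat) set" where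
  "lg_items m X K L = {(i, l) | i l. i \<in> X \<and> i \<in> grp m (L (K i)) l \<and> 1 \<le> l}"

definition lg_size :: "nat \<Rightarrow> ('i \<Rightarrow> real) \<Rightarrow> ('i \<Rightarrow> nat set) \<Rightarrow> (nat set \<Rightarrow> 'i list) \<Rightarrow> 'i \<times> nat \<Rightarrow> real" where
  "lg_size m s K L = (\<lambda>(i, l). Max (s ` grp m (L (K i)) l))"

definition lg_type :: "('i \<Rightarrow> nat set) \<Rightarrow> 'i \<times> nat \<Rightarrow> nat set" where
  "lg_type K = (\<lambda>(i, l). K i)"

end

theory Submission
  imports Defs
begin

lemma max_mono_aux:
  fixes f g :: "nat \<Rightarrow> nat"
  assumes "finite A" "A \<noteq> {}" "\<And>k. k \<in> A \<Longrightarrow> f k \<le> g k"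
  shows "Max (f ` A) \<le> Max (g ` A)"
  using assms by (subst Max_le_iff) (auto intro: order.trans[OF _ Max_ge])

lemma packing_finite:
  assumes "is_packing d s K X P" "finite X"
  shows "finite P"
  using assms unfolding is_packing_def partition_on_def
  by (meson finite_UnionD)

lemma transfer_packing:
  assumes P: "is_packing d s K X P" and inj: "inj_on g Y" and gY: "g ` Y \<subseteq> X"
    and ty: "\<forall>y\<in>Y. K' y = K (g y) \<and> s' y \<le> s (g y)"
    and pos: "\<forall>i\<in>X. 0 \<le> s i" and d: "d \<ge> 1" and fin: "finite X"
  defines "Q \<equiv> (\<lambda>B. {y\<in>Y. g y \<in> B}) ` P - {{}}"
  shows "is_packing d s' K' Y Q \<and> val_bpps d K' Q \<le> val_bpps d K P"
proof -
  have pP: "partition_on X P" and capP: "\<forall>B\<in>P. \<forall>k\<in>{1..d}. (\<Sum>i\<in>{i\<in>B. k \<in> K i}. s i) \<le> 1"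
    using P unfolding is_packing_def by auto
  have finP: "finite P" using packing_finite[OF P fin] .
  have finY: "finite Y" using finite_imageD[OF finite_subset[OF gY fin] inj] .
  have part: "partition_on Y Q"
    unfolding partition_on_def disjoint_def Q_def
  proof (intro conjI)
    show "\<Union> ((\<lambda>B. {y \<in> Y. g y \<in> B}) ` P - {{}}) = Y"
      using pP gY unfolding partition_on_def by blast
    show "\<forall>A\<in>(\<lambda>B. {y \<in> Y. g y \<in> B}) ` P - {{}}. \<forall>B\<in>(\<lambda>B. {y \<in> Y. g y \<in> B}) ` P - {{}}. A \<noteq> B \<longrightarrow> A \<inter> B = {}"
      using pP unfolding partition_on_def disjoint_def by blast
  qed auto
  have cap: "\<forall>C\<in>Q. \<forall>k\<in>{1..d}. (\<Sum>y\<in>{y\<in>C. k \<in> K' y}. s' y) \<le> 1"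
  proof (intro ballI)
    fix C k assume C: "C \<in> Q" and k: "k \<in> {1..d}"
    then obtain B where B: "B \<in> P" and CB: "C = {y\<in>Y. g y \<in> B}" unfolding Q_def by auto
    have BX: "B \<subseteq> X" using B pP unfolding partition_on_def by blast
    let ?C = "{y\<in>C. k \<in> K' y}"
    have fC: "finite ?C" using CB finY by auto
    have injC: "inj_on g ?C" using inj CB by (auto intro: inj_on_subset)
    have "(\<Sum>y\<in>?C. s' y) \<le> (\<Sum>y\<in>?C. s (g y))"
      by (rule sum_mono) (use ty CB in auto)
    also have "\<dots> = (\<Sum>i\<in>g ` ?C. s i)" using sum.reindex[OF injC, of s] by (simp add: comp_def)
    also have "\<dots> \<le> (\<Sum>i\<in>{i\<in>B. k \<in> K i}. s i)"
      apply (rule sum_mono2)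
      using BX fin apply (auto intro: finite_subset)[1]
      using ty CB apply auto[1]
      using pos BX by auto
    also have "\<dots> \<le> 1" using capP B k by blast
    finally show "(\<Sum>y\<in>?C. s' y) \<le> 1" .
  qed
  have val: "val_bpps d K' Q \<le> val_bpps d K P"
    unfolding val_bpps_def
  proof (rule max_mono_aux)
    show "{1..d} \<noteq> {}" using d by auto
    fix k
    let ?A = "{B\<in>P. \<exists>i\<in>B. k \<in> K i}"
    have "{C\<in>Q. \<exists>y\<in>C. k \<in> K' y} \<subseteq> (\<lambda>B. {y\<in>Y. g y \<in> B}) ` ?A"
      unfolding Q_def using ty by fastforce
    hence "card {C\<in>Q. \<exists>y\<in>C. k \<in> K' y} \<le> card ((\<lambda>B. {y\<in>Y. g y \<in> B}) ` ?A)"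
      by (intro card_mono) (use finP in auto)
    also have "\<dots> \<le> card ?A" by (rule card_image_le) (use finP in auto)
    finally show "card {C\<in>Q. \<exists>y\<in>C. k \<in> K' y} \<le> card ?A" .
  qed simp
  show ?thesis using part cap val unfolding is_packing_def by auto
qed

lemma opt_attained:
  assumes "bpps_instance d X s K"
  shows "\<exists>P. is_packing d s K X P \<and> val_bpps d K P = OPT_bpps d s K X"
proof -
  let ?P = "(\<lambda>i. {i}) ` X"
  have "is_packing d s K X ?P"
    unfolding is_packing_def partition_on_def disjoint_def
  proof (intro conjI ballI)
    fix B k assume "B \<in> ?P" "k \<in> {1..d}"
    then obtain j where j: "j \<in> X" "B = {j}" by auto
    show "(\<Sum>i\<in>{i\<in>B. k \<in> K i}. s i) \<le> 1"
    proof (cases "k \<in> K j")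
      case True
      then have "{i\<in>B. k \<in> K i} = {j}" using j by auto
      then show ?thesis using assms j unfolding bpps_instance_def by auto
    next
      case False
      then have "{i\<in>B. k \<in> K i} = {}" using j by auto
      then show ?thesis by (simp only:) simp
    qed
  qed auto
  then have "\<exists>n P. is_packing d s K X P \<and> val_bpps d K P = n" by blast
  from LeastI_ex[OF this] show ?thesis unfolding OPT_bpps_def by blast
qed

theorem lemma6:
  fixes d m :: nat and \<epsilon> :: real and X :: "'i set" and s :: "'i \<Rightarrow> real"
    and K :: "'i \<Rightarrow> nat set" and L :: "nat set \<Rightarrow> 'i list"
    and Pbar :: "('i \<times> nat) set set"
  assumes inst: "bpps_instance d X s K"
    and eps: "0 < \<epsilon>" "\<epsilon> \<le> 1/4" "\<exists>N::nat. 1 / \<epsilon> = real N"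
    and m_def: "real m = 2 ^ d / \<epsilon> ^ 3 - 1"
    and big: "\<forall>i\<in>X. s i \<ge> \<epsilon>\<^sup>2"
    and sorted: "sorted_type_lists X s K L"
    and Pbar_pack: "is_packing d (lg_size m s K L) (lg_type K) (lg_items m X K L) Pbar"
    and Pbar_opt: "val_bpps d (lg_type K) Pbar
                    = OPT_bpps d (lg_size m s K L) (lg_type K) (lg_items m X K L)"
  shows "val_bpps d K ((\<lambda>B. fst ` B) ` Pbar) \<le> OPT_bpps d s K X"
proof -
  define q where "q t = grp_size m (L t)" for t
  define pos where "pos i = (SOME p. p < length (L (K i)) \<and> L (K i) ! p = i)" for i
  define g :: "'i \<times> nat \<Rightarrow> 'i" where "g y = L (K (fst y)) ! (pos (fst y) - q (K (fst y)))" for y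
  let ?Y = "lg_items m X K L"
  have dist: "\<And>t. distinct (L t)" and setL: "\<And>t. set (L t) = {i\<in>X. K i = t}"
    and srt: "\<And>t. sorted_wrt (\<lambda>a b. s a \<ge> s b) (L t)"
    using sorted unfolding sorted_type_lists_def by auto
  have fin: "finite X" and d: "d \<ge> 1" and pos0: "\<forall>i\<in>X. 0 \<le> s i"
    using inst unfolding bpps_instance_def by auto
  have key: "\<exists>p. p < length (L (K i)) \<and> L (K i) ! p = i \<and> p div q (K i) = l \<and> pos i = p
      \<and> q (K i) > 0 \<and> p \<ge> q (K i) \<and> i \<in> X"
    if "(i, l) \<in> ?Y" for i l
  proof -
    from that have iX: "i \<in> X" and l1: "1 \<le> l" and ig: "i \<in> grp m (L (K i)) l"
      unfolding lg_items_def by auto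
    from ig obtain p where p: "p < length (L (K i))" "L (K i) ! p = i" "p div q (K i) = l"
      unfolding grp_def q_def by auto
    have "pos i = p" unfolding pos_def
    proof (rule some_equality)
      show "p < length (L (K i)) \<and> L (K i) ! p = i" using p by auto
      fix p' assume "p' < length (L (K i)) \<and> L (K i) ! p' = i"
      then show "p' = p" using p dist nth_eq_iff_index_eq by metis
    qed
    moreover have "q (K i) > 0" using p l1 by (cases "q (K i) = 0") auto
    moreover have "p \<ge> q (K i)" using p l1
      by (metis div_less not_le not_one_le_zero)
    ultimately show ?thesis using p iX by blast
  qed
  have gprop: "g y \<in> X \<and> K (g y) = K (fst y) \<and> lg_type K y = K (g y) \<and> lg_size m s K L y \<le> s (g y)"
    if y: "y \<in> ?Y" for y
  proof -
    obtain i l where yil: "y = (i, l)" by force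
    from key[OF y[unfolded yil]] obtain p where p: "p < length (L (K i))" "L (K i) ! p = i"
      "p div q (K i) = l" "pos i = p" "q (K i) > 0" "p \<ge> q (K i)" "i \<in> X" by blast
    have gy: "g y = L (K i) ! (p - q (K i))" unfolding g_def yil using p by simp
    have mem: "g y \<in> set (L (K i))" using gy p by simp
    hence A: "g y \<in> X \<and> K (g y) = K i" using setL by auto
    have "Max (s ` grp m (L (K i)) l) \<le> s (g y)"
    proof (subst Max_le_iff)
      show "finite (s ` grp m (L (K i)) l)" 
        by (rule finite_imageI, rule finite_subset[of _ "set (L (K i))"]) (auto simp: grp_def)
      show "s ` grp m (L (K i)) l \<noteq> {}" using p unfolding grp_def q_def by blast
      show "\<forall>a\<in>s ` grp m (L (K i)) l. a \<le> s (g y)"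
      proof
        fix a assume "a \<in> s ` grp m (L (K i)) l"
        then obtain p' where p': "p' < length (L (K i))" "p' div q (K i) = l" "a = s (L (K i) ! p')"
          unfolding grp_def q_def by auto
        have e1: "p' = l * q (K i) + p' mod q (K i)" using p'(2) div_mult_mod_eq[of p' "q (K i)"] by simp
        have e2: "p = l * q (K i) + p mod q (K i)" using p(3) div_mult_mod_eq[of p "q (K i)"] by simp
        have e3: "p mod q (K i) < q (K i)" using p(5) by simp
        have lt: "p - q (K i) < p'" using e1 e2 e3 p(6) by linarith
        show "a \<le> s (g y)" unfolding gy p'(3)
          using sorted_wrt_nth_less[OF srt lt p'(1)] by simp
      qed
    qed
    then show ?thesis using A unfolding yil lg_type_def lg_size_def by simp
  qed
  have inj: "inj_on g ?Y"
  proof (rule inj_onI)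
    fix y y' assume y: "y \<in> ?Y" and y': "y' \<in> ?Y" and eq: "g y = g y'"
    obtain i l where yil: "y = (i, l)" by force
    obtain i' l' where yil': "y' = (i', l')" by force
    from key[OF y[unfolded yil]] obtain p where p: "p < length (L (K i))" "L (K i) ! p = i"
      "p div q (K i) = l" "pos i = p" "q (K i) > 0" "p \<ge> q (K i)" by blast
    from key[OF y'[unfolded yil']] obtain p' where p': "p' < length (L (K i'))" "L (K i') ! p' = i'"
      "p' div q (K i') = l'" "pos i' = p'" "q (K i') > 0" "p' \<ge> q (K i')" by blast
    have "K i = K i'" using gprop[OF y] gprop[OF y'] eq yil yil' by simp
    then have "L (K i) ! (p - q (K i)) = L (K i) ! (p' - q (K i))"
      using eq p p' unfolding g_def yil yil' by simp
    moreover have "p - q (K i) < length (L (K i))" using p by simp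
    moreover have "p' - q (K i) < length (L (K i))" using p' \<open>K i = K i'\<close> by simp
    ultimately have "p - q (K i) = p' - q (K i)"
      using nth_eq_iff_index_eq[OF dist[of "K i"]] by blast
    moreover have "q (K i') = q (K i)" using \<open>K i = K i'\<close> by simp
    ultimately have pp: "p = p'" using p(6) p'(6) by linarith
    have "i = i'" using p(2) p'(2) \<open>K i = K i'\<close> pp by metis
    moreover have "l = l'" using p(3) p'(3) \<open>q (K i') = q (K i)\<close> pp by metis
    ultimately show "y = y'" using yil yil' by blast
  qed
  obtain P where P: "is_packing d s K X P" "val_bpps d K P = OPT_bpps d s K X"
    using opt_attained[OF inst] by blast
  define Q where "Q = (\<lambda>B. {y\<in>?Y. g y \<in> B}) ` P - {{}}"
  have Q: "is_packing d (lg_size m s K L) (lg_type K) ?Y Q \<and> val_bpps d (lg_type K) Q \<le> val_bpps d K P"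
    unfolding Q_def
    by (rule transfer_packing[OF P(1) inj _ _ pos0 d fin]) (use gprop in auto)
  have "OPT_bpps d (lg_size m s K L) (lg_type K) ?Y \<le> val_bpps d (lg_type K) Q"
    unfolding OPT_bpps_def using Q by (intro Least_le) blast
  then have v1: "val_bpps d (lg_type K) Pbar \<le> OPT_bpps d s K X"
    using Q P Pbar_opt by simp
  have finY: "finite ?Y" using finite_imageD[OF finite_subset[OF _ fin] inj] gprop by blast
  have finPb: "finite Pbar" using packing_finite[OF Pbar_pack finY] .
  have "val_bpps d K ((\<lambda>B. fst ` B) ` Pbar) \<le> val_bpps d (lg_type K) Pbar"
    unfolding val_bpps_def
  proof (rule max_mono_aux)
    show "{1..d} \<noteq> {}" using d by auto
    fix k
    let ?A = "{B\<in>Pbar. \<exists>x\<in>B. k \<in> lg_type K x}"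
    have "{B\<in>(\<lambda>B. fst ` B) ` Pbar. \<exists>i\<in>B. k \<in> K i} \<subseteq> (\<lambda>B. fst ` B) ` ?A"
      unfolding lg_type_def by fastforce
    hence "card {B\<in>(\<lambda>B. fst ` B) ` Pbar. \<exists>i\<in>B. k \<in> K i} \<le> card ((\<lambda>B. fst ` B) ` ?A)"
      by (intro card_mono) (use finPb in auto)
    also have "\<dots> \<le> card ?A" by (rule card_image_le) (use finPb in auto)
    finally show "card {B\<in>(\<lambda>B. fst ` B) ` Pbar. \<exists>i\<in>B. k \<in> K i} \<le> card ?A" .
  qed simp
  with v1 show ?thesis by linarith
qed

end
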